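(* For any separable metric space $(\mathcal{X},\rho)$ (with its Borel $\sigma$-algebra $\mathcal{B}$), $\mathrm{FMV}=\mathrm{FS}$. That is, a stochastic process $\mathbb{X}$ on $\mathcal{X}$ takes only finitely many distinct values almost surely if and only if for every countable measurable partition $\{A_k\}_{k\ge1}$ of $\mathcal{X}$, almost surely $\mathbb{X}$ visits only finitely many of the sets $A_k$.
   Context: $\mathrm{FS}$: the set of processes $\mathbb{X}=(X_t)_{t\ge1}$ with $\#\{x\in\mathcal{X}:\exists t,\ X_t=x\}<\infty$ a.s. $\mathrm{FMV}$: the set of processes $\mathbb{X}$ such that for every sequence of pairwise disjoint sets $\{A_k\}_{k\ge1}\subset\mathcal{B}$ with $\bigcup_kA_k=\mathcal{X}$, $\#\{k\in\mathbb{N}: \exists t,\ X_t\in A_k\}<\infty$ almost surely. *)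

theory Defs
  imports "HOL-Probability.Probability"
begin

text \<open>A process is a sequence X t (t \<ge> 1) of random elements X t : M \<rightarrow> 'a,
  where 'a carries its Borel sigma-algebra.\<close>

definition FS :: "'b measure \<Rightarrow> (nat \<Rightarrow> 'b \<Rightarrow> 'a::topological_space) \<Rightarrow> bool" where
  "FS M X \<longleftrightarrow> (AE \<omega> in M. finite {x. \<exists>t\<ge>1. X t \<omega> = x})"

definition FMV :: "'b measure \<Rightarrow> (nat \<Rightarrow> 'b \<Rightarrow> 'a::topological_space) \<Rightarrow> bool" where
  "FMV M X \<longleftrightarrow>
     (\<forall>A :: nat \<Rightarrow> 'a set.
        (\<forall>k\<ge>1. A k \<in> sets borel) \<and> disjoint_family_on A {1..} \<and> (\<Union>k\<in>{1..}. A k) = UNIV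
        \<longrightarrow> (AE \<omega> in M. finite {k. k \<ge> 1 \<and> (\<exists>t\<ge>1. X t \<omega> \<in> A k)}))"

end

theory Submission
  imports Defs
begin


lemma ev_ex: "eventually P sequentially \<Longrightarrow> \<exists>n. P n"
  unfolding eventually_sequentially by blast

definition gcell :: "(nat \<Rightarrow> 'a::metric_space) \<Rightarrow> nat \<Rightarrow> 'a \<Rightarrow> nat" where
  "gcell q n x = (LEAST i. dist x (q i) < 1 / real (Suc n))"

primrec ccell :: "(nat \<Rightarrow> 'a::metric_space) \<Rightarrow> nat \<Rightarrow> 'a \<Rightarrow> nat" where
  "ccell q 0 x = gcell q 0 x"
| "ccell q (Suc N) x = prod_encode (ccell q N x, gcell q (Suc N) x)"

definition hit :: "(nat \<Rightarrow> 'b \<Rightarrow> 'a) \<Rightarrow> 'a set \<Rightarrow> 'b \<Rightarrow> bool" where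
  "hit X B \<omega> \<longleftrightarrow> (\<exists>t\<ge>1. X t \<omega> \<in> B)"

definition Vs :: "(nat \<Rightarrow> 'b \<Rightarrow> 'a) \<Rightarrow> 'b \<Rightarrow> 'a set" where
  "Vs X \<omega> = {x. \<exists>t\<ge>1. X t \<omega> = x}"

context
  fixes q :: "nat \<Rightarrow> 'a::metric_space"
  assumes dense: "\<And>x e. e > 0 \<Longrightarrow> \<exists>i. dist x (q i) < e"
begin

lemma gcell_prop: "dist x (q (gcell q n x)) < 1 / real (Suc n)"
  unfolding gcell_def by (rule LeastI_ex) (rule dense, simp)

lemma gcell_eq_iff: "gcell q n x = i \<longleftrightarrow>
   dist x (q i) < 1 / real (Suc n) \<and> (\<forall>j<i. \<not> dist x (q j) < 1 / real (Suc n))"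
proof
  assume "gcell q n x = i"
  then show "dist x (q i) < 1 / real (Suc n) \<and> (\<forall>j<i. \<not> dist x (q j) < 1 / real (Suc n))"
    using gcell_prop[of x n] not_less_Least unfolding gcell_def by blast
next
  assume h: "dist x (q i) < 1 / real (Suc n) \<and> (\<forall>j<i. \<not> dist x (q j) < 1 / real (Suc n))"
  show "gcell q n x = i" unfolding gcell_def
    by (rule Least_equality) (use h in \<open>auto simp: not_less[symmetric]\<close>)
qed

lemma gcell_sep: "gcell q n x = gcell q n y \<Longrightarrow> dist x y < 2 / real (Suc n)"
proof -
  assume e: "gcell q n x = gcell q n y"
  have "dist x y \<le> dist x (q (gcell q n x)) + dist y (q (gcell q n x))"
    by (rule dist_triangle2)
  also have "\<dots> < 1 / real (Suc n) + 1 / real (Suc n)"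
    using gcell_prop[of x n] gcell_prop[of y n] e by simp
  finally show ?thesis by simp
qed

lemma gcell_meas: "gcell q n \<in> borel \<rightarrow>\<^sub>M count_space UNIV"
proof (subst measurable_count_space_eq2_countable, safe)
  fix i
  let ?r = "1 / real (Suc n)"
  have eq: "gcell q n -` {i} = {x. dist x (q i) < ?r} \<inter> (\<Inter>j\<in>{..<i}. {x. ?r \<le> dist x (q j)})"
    by (rule set_eqI) (simp only: vimage_singleton_eq gcell_eq_iff, auto simp: not_less)
  have "open {x. dist x (q i) < ?r}"
    by (intro open_Collect_less continuous_intros)
  moreover have cl: "\<And>j. closed {x. ?r \<le> dist x (q j)}"
    by (intro closed_Collect_le continuous_intros)
  moreover have "closed (\<Inter>j\<in>{..<i}. {x. ?r \<le> dist x (q j)})"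
    using cl by (intro closed_INT) auto
  ultimately have "gcell q n -` {i} \<in> sets borel"
    unfolding eq by (intro sets.Int borel_open borel_closed)
  then show "gcell q n -` {i} \<inter> space borel \<in> sets borel" by simp
qed simp

lemma ccell_meas: "ccell q N \<in> borel \<rightarrow>\<^sub>M count_space UNIV"
proof (induction N)
  case 0 then show ?case using gcell_meas by simp
next
  case (Suc N)
  show ?case
  proof (subst measurable_count_space_eq2_countable, safe)
    fix a
    have "ccell q (Suc N) -` {a} = ccell q N -` {fst (prod_decode a)} \<inter> gcell q (Suc N) -` {snd (prod_decode a)}"
    proof -
      have e: "\<And>p. prod_encode p = a \<longleftrightarrow> p = prod_decode a"
        by (metis prod_decode_inverse prod_encode_inverse)
      show ?thesis by (rule set_eqI) (simp add: e prod_eq_iff)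
    qed
    moreover have "ccell q N -` {fst (prod_decode a)} \<in> sets borel"
      using Suc by (simp add: measurable_count_space_eq2_countable)
    moreover have "gcell q (Suc N) -` {snd (prod_decode a)} \<in> sets borel"
      using gcell_meas[of "Suc N"] by (simp add: measurable_count_space_eq2_countable)
    ultimately show "ccell q (Suc N) -` {a} \<inter> space borel \<in> sets borel" by auto
  qed simp
qed

lemma ccell_refine: "N \<le> N' \<Longrightarrow> ccell q N' x = ccell q N' y \<Longrightarrow> ccell q N x = ccell q N y"
proof (induction N' rule: dec_induct)
  case base then show ?case by simp
next
  case (step n) then show ?case by (simp add: prod_encode_eq)
qed

lemma ccell_sep: assumes "ccell q N x = ccell q N y" shows "dist x y < 2 / real (Suc N)"
proof (cases N)
  case 0 then show ?thesis using assms gcell_sep[of N x y] by simp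
next
  case (Suc n) then show ?thesis using assms gcell_sep[of N x y] by (simp add: prod_encode_eq)
qed

end

lemma ccell_vimage: "(\<And>x e. e > 0 \<Longrightarrow> \<exists>i. dist x (q i) < e) \<Longrightarrow> ccell q N -` {i} \<in> sets borel"
  using ccell_meas[of q N] by (simp add: measurable_count_space_eq2_countable)

locale fmvp = prob_space M for M :: "'b measure" +
  fixes X :: "nat \<Rightarrow> 'b \<Rightarrow> 'a::metric_space" and q :: "nat \<Rightarrow> 'a"
  assumes Xm: "\<And>t. t \<ge> 1 \<Longrightarrow> X t \<in> borel_measurable M"
  and dense: "\<And>x e. e > 0 \<Longrightarrow> \<exists>i. dist x (q i) < e"
begin

lemmas cvim = ccell_vimage[OF dense]

lemma hit_sets: assumes B: "B \<in> sets borel" shows "{\<omega>\<in>space M. hit X B \<omega>} \<in> sets M"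
proof -
  have "{\<omega>\<in>space M. hit X B \<omega>} = (\<Union>t\<in>{1..}. X t -` B \<inter> space M)" by (auto simp: hit_def)
  also have "\<dots> \<in> sets M" using B Xm by (intro sets.countable_UN') (auto intro: measurable_sets)
  finally show ?thesis .
qed

definition "cnt N B m \<omega> \<longleftrightarrow> (\<exists>K. finite K \<and> card K = m \<and> (\<forall>i\<in>K. hit X (B \<inter> ccell q N -` {i}) \<omega>))"
definition "cntP N B m \<omega> \<longleftrightarrow> (\<exists>F. finite F \<and> card F = m \<and> F \<subseteq> Vs X \<omega> \<inter> B \<and> inj_on (ccell q N) F)"

lemma cnt_iff: "cnt N B m \<omega> \<longleftrightarrow> cntP N B m \<omega>"
proof
  assume "cnt N B m \<omega>"
  then obtain K where K: "finite K" "card K = m" "\<forall>i\<in>K. hit X (B \<inter> ccell q N -` {i}) \<omega>"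
    unfolding cnt_def by blast
  have "\<forall>i\<in>K. \<exists>x. x \<in> Vs X \<omega> \<inter> B \<and> ccell q N x = i"
    using K(3) unfolding hit_def Vs_def by blast
  then obtain f where f: "\<forall>i\<in>K. f i \<in> Vs X \<omega> \<inter> B \<and> ccell q N (f i) = i"
    by metis
  have inj: "inj_on f K" using f by (metis inj_onI)
  show "cntP N B m \<omega>" unfolding cntP_def
  proof (intro exI conjI)
    show "finite (f ` K)" using K by simp
    show "card (f ` K) = m" using K inj by (simp add: card_image)
    show "f ` K \<subseteq> Vs X \<omega> \<inter> B" using f by blast
    show "inj_on (ccell q N) (f ` K)" using f by (auto simp: inj_on_def)
  qed
next
  assume "cntP N B m \<omega>"
  then obtain F where F: "finite F" "card F = m" "F \<subseteq> Vs X \<omega> \<inter> B" "inj_on (ccell q N) F"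
    unfolding cntP_def by blast
  show "cnt N B m \<omega>" unfolding cnt_def
  proof (intro exI conjI)
    show "finite (ccell q N ` F)" using F by simp
    show "card (ccell q N ` F) = m" using F by (simp add: card_image)
    show "\<forall>i\<in>ccell q N ` F. hit X (B \<inter> ccell q N -` {i}) \<omega>"
      using F(3) unfolding hit_def Vs_def by blast
  qed
qed

lemma cntP_mono: assumes "N \<le> N'" "cntP N B m \<omega>" shows "cntP N' B m \<omega>"
proof -
  obtain F where F: "finite F" "card F = m" "F \<subseteq> Vs X \<omega> \<inter> B" "inj_on (ccell q N) F"
    using assms(2) unfolding cntP_def by blast
  have "inj_on (ccell q N') F"
    using F(4) ccell_refine[OF dense assms(1)] unfolding inj_on_def by blast
  then show ?thesis using F unfolding cntP_def by blast
qed

lemma inf_iff: "infinite (Vs X \<omega> \<inter> B) \<longleftrightarrow> (\<forall>m. \<exists>N. cntP N B m \<omega>)"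
proof
  assume inf: "infinite (Vs X \<omega> \<inter> B)"
  show "\<forall>m. \<exists>N. cntP N B m \<omega>"
  proof
    fix m
    obtain F where F: "F \<subseteq> Vs X \<omega> \<inter> B" "finite F" "card F = m"
      using infinite_arbitrarily_large[OF inf] by blast
    have ev: "\<forall>p\<in>F\<times>F. eventually (\<lambda>N. fst p \<noteq> snd p \<longrightarrow> 2 / real (Suc N) < dist (fst p) (snd p)) sequentially"
    proof
      fix p assume "p \<in> F \<times> F"
      show "eventually (\<lambda>N. fst p \<noteq> snd p \<longrightarrow> 2 / real (Suc N) < dist (fst p) (snd p)) sequentially"
      proof (cases "fst p = snd p")
        case False
        then have d: "dist (fst p) (snd p) > 0" by simp
        obtain n where n: "2 / dist (fst p) (snd p) < real n" using reals_Archimedean2 by blast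
        show ?thesis
        proof (rule eventually_sequentiallyI[of n])
          fix N assume "n \<le> N"
          then have "2 / dist (fst p) (snd p) < real (Suc N)" using n by simp
          then have "2 < real (Suc N) * dist (fst p) (snd p)" using d by (simp add: field_simps)
          then show "fst p \<noteq> snd p \<longrightarrow> 2 / real (Suc N) < dist (fst p) (snd p)"
            by (simp add: field_simps)
        qed
      qed simp
    qed
    have "eventually (\<lambda>N. \<forall>p\<in>F\<times>F. fst p \<noteq> snd p \<longrightarrow> 2 / real (Suc N) < dist (fst p) (snd p)) sequentially"
      by (rule eventually_ball_finite[OF _ ev]) (use F(2) in simp)
    then obtain N where N: "\<forall>p\<in>F\<times>F. fst p \<noteq> snd p \<longrightarrow> 2 / real (Suc N) < dist (fst p) (snd p)"
      using ev_ex by blast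
    have "inj_on (ccell q N) F"
    proof (rule inj_onI, rule ccontr)
      fix x y assume xy: "x \<in> F" "y \<in> F" "ccell q N x = ccell q N y" "x \<noteq> y"
      then have "2 / real (Suc N) < dist x y" using N[rule_format, of "(x,y)"] by simp
      moreover have "dist x y < 2 / real (Suc N)" using ccell_sep[OF dense xy(3)] .
      ultimately show False by simp
    qed
    then show "\<exists>N. cntP N B m \<omega>" using F unfolding cntP_def by blast
  qed
next
  assume h: "\<forall>m. \<exists>N. cntP N B m \<omega>"
  show "infinite (Vs X \<omega> \<inter> B)"
  proof
    assume fin: "finite (Vs X \<omega> \<inter> B)"
    obtain N where "cntP N B (Suc (card (Vs X \<omega> \<inter> B))) \<omega>" using h by blast
    then obtain F where F: "finite F" "card F = Suc (card (Vs X \<omega> \<inter> B))" "F \<subseteq> Vs X \<omega> \<inter> B"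
      unfolding cntP_def by blast
    have "card F \<le> card (Vs X \<omega> \<inter> B)" using card_mono[OF fin F(3)] .
    then show False using F(2) by simp
  qed
qed

lemma inf_sets: assumes B: "B \<in> sets borel"
  shows "{\<omega>\<in>space M. infinite (Vs X \<omega> \<inter> B)} \<in> sets M"
proof -
  have "{\<omega>\<in>space M. infinite (Vs X \<omega> \<inter> B)} =
     {\<omega>\<in>space M. \<forall>m::nat. \<exists>N::nat. \<exists>K\<in>{K. finite K \<and> card K = m}. \<forall>i::nat\<in>K. hit X (B \<inter> ccell q N -` {i}) \<omega>}"
    unfolding inf_iff cnt_iff[symmetric] cnt_def by blast
  also have "\<dots> \<in> sets M"
    by (intro sets.sets_Collect_countable_All sets.sets_Collect_countable_Ex sets.sets_Collect_countable_Ex'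
         sets.sets_Collect_countable_Ball hit_sets sets.Int B cvim countable_subset[OF _ countable_Collect_finite]) auto
  finally show ?thesis .
qed

end


lemma pmf_part:
  fixes \<alpha> :: real and L :: nat
  assumes a: "0 \<le> \<alpha>" "\<alpha> \<le> 1" and i0: "i0 < L" and K: "K \<subseteq> {..<L}"
  shows "measure_pmf.prob (Pi_pmf {..<L} False (\<lambda>_. bernoulli_pmf \<alpha>)) {b. \<not> b i0 \<and> (\<exists>i\<in>K. b i)}
           \<ge> 1 - \<alpha> - (1 - \<alpha>) ^ card K"
proof -
  let ?\<nu> = "Pi_pmf {..<L} False (\<lambda>_. bernoulli_pmf \<alpha>)"
  have fK: "finite K" using K finite_subset by blast
  have bt: "measure_pmf.prob (bernoulli_pmf \<alpha>) {True} = \<alpha>" using a by (simp add: measure_pmf_single)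
  have bf: "measure_pmf.prob (bernoulli_pmf \<alpha>) {False} = 1 - \<alpha>" using a by (simp add: measure_pmf_single)
  have e1: "{b. b i0} = Pi {..<L} (\<lambda>x. if x = i0 then {True} else UNIV)"
    using i0 by (auto simp: Pi_def)
  have p1: "measure_pmf.prob ?\<nu> {b. b i0} = \<alpha>"
  proof -
    have "measure_pmf.prob ?\<nu> {b. b i0} =
        (\<Prod>x\<in>{..<L}. measure_pmf.prob (bernoulli_pmf \<alpha>) (if x = i0 then {True} else UNIV))"
      unfolding e1 by (rule measure_Pi_pmf_Pi) simp
    also have "\<dots> = (\<Prod>x\<in>{..<L}. if x = i0 then \<alpha> else 1)"
      by (intro prod.cong) (auto simp: bt)
    also have "\<dots> = \<alpha>" using i0 by (simp add: prod.delta)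
    finally show ?thesis .
  qed
  have e2: "{b. \<forall>i\<in>K. \<not> b i} = Pi {..<L} (\<lambda>x. if x \<in> K then {False} else UNIV)"
    using K by (auto simp: Pi_def)
  have p2: "measure_pmf.prob ?\<nu> {b. \<forall>i\<in>K. \<not> b i} = (1 - \<alpha>) ^ card K"
  proof -
    have "measure_pmf.prob ?\<nu> {b. \<forall>i\<in>K. \<not> b i} =
        (\<Prod>x\<in>{..<L}. measure_pmf.prob (bernoulli_pmf \<alpha>) (if x \<in> K then {False} else UNIV))"
      unfolding e2 by (rule measure_Pi_pmf_Pi) simp
    also have "\<dots> = (\<Prod>x\<in>{..<L}. if x \<in> K then 1 - \<alpha> else 1)"
      by (intro prod.cong) (auto simp: bf)
    also have "\<dots> = (\<Prod>x\<in>{..<L} \<inter> K. 1 - \<alpha>)" by (rule prod.inter_restrict[symmetric]) simp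
    also have "{..<L} \<inter> K = K" using K by blast
    finally show ?thesis by simp
  qed
  have "UNIV - {b. \<not> b i0 \<and> (\<exists>i\<in>K. b i)} = {b. b i0} \<union> {b. \<forall>i\<in>K. \<not> b i}" by auto
  then have "measure_pmf.prob ?\<nu> (UNIV - {b. \<not> b i0 \<and> (\<exists>i\<in>K. b i)}) \<le> \<alpha> + (1 - \<alpha>) ^ card K"
    using measure_Un_le[of "{b. b i0}" ?\<nu> "{b. \<forall>i\<in>K. \<not> b i}"] p1 p2 by simp
  moreover have "measure_pmf.prob ?\<nu> (UNIV - {b. \<not> b i0 \<and> (\<exists>i\<in>K. b i)}) = 1 - measure_pmf.prob ?\<nu> {b. \<not> b i0 \<and> (\<exists>i\<in>K. b i)}"
    using measure_pmf.prob_compl[of "{b. \<not> b i0 \<and> (\<exists>i\<in>K. b i)}" ?\<nu>] by simp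
  ultimately show ?thesis by simp
qed

context fmvp begin

lemma fmv_bound: assumes fmv: "FMV M X"
  shows "AE \<omega> in M. \<exists>L. \<forall>i. hit X (ccell q N -` {i}) \<omega> \<longrightarrow> i < L"
proof -
  define A where "A k = (if k \<ge> 1 then ccell q N -` {k - 1} else {})" for k
  have "(\<forall>k\<ge>1. A k \<in> sets borel) \<and> disjoint_family_on A {1..} \<and> (\<Union>k\<in>{1..}. A k) = UNIV"
  proof (intro conjI)
    show "\<forall>k\<ge>1. A k \<in> sets borel" by (auto simp: A_def cvim)
    show "disjoint_family_on A {1..}" by (auto simp: A_def disjoint_family_on_def)
    show "(\<Union>k\<in>{1..}. A k) = UNIV"
    proof (rule set_eqI)
      fix x have "x \<in> A (Suc (ccell q N x))" by (simp add: A_def)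
      then show "x \<in> (\<Union>k\<in>{1..}. A k) \<longleftrightarrow> x \<in> UNIV" by force
    qed
  qed
  then have "AE \<omega> in M. finite {k. k \<ge> 1 \<and> (\<exists>t\<ge>1. X t \<omega> \<in> A k)}"
    using fmv unfolding FMV_def by blast
  then show ?thesis
  proof (rule eventually_mono)
    fix \<omega> assume "finite {k. k \<ge> 1 \<and> (\<exists>t\<ge>1. X t \<omega> \<in> A k)}"
    then obtain m where m: "\<forall>k\<in>{k. k \<ge> 1 \<and> (\<exists>t\<ge>1. X t \<omega> \<in> A k)}. k < m"
      using finite_nat_set_iff_bounded by blast
    show "\<exists>L. \<forall>i. hit X (ccell q N -` {i}) \<omega> \<longrightarrow> i < L"
    proof (intro exI allI impI)
      fix i assume "hit X (ccell q N -` {i}) \<omega>"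
      then have "Suc i \<in> {k. k \<ge> 1 \<and> (\<exists>t\<ge>1. X t \<omega> \<in> A k)}" by (auto simp: hit_def A_def)
      then show "i < m" using m by fastforce
    qed
  qed
qed

lemma cnt_sets: assumes B: "B \<in> sets borel" shows "{\<omega>\<in>space M. cnt N B m \<omega>} \<in> sets M"
proof -
  have "{\<omega>\<in>space M. cnt N B m \<omega>} =
     {\<omega>\<in>space M. \<exists>K\<in>{K. finite K \<and> card K = m}. \<forall>i::nat\<in>K. hit X (B \<inter> ccell q N -` {i}) \<omega>}"
    unfolding cnt_def by blast
  also have "\<dots> \<in> sets M"
    by (intro sets.sets_Collect_countable_Ex'
         sets.sets_Collect_countable_Ball hit_sets sets.Int B cvim countable_subset[OF _ countable_Collect_finite]) auto
  finally show ?thesis .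
qed

end


context fmvp begin

lemma split_step:
  assumes fmv: "FMV M X" and B: "B \<in> sets borel" and \<delta>: "0 < \<delta>" "\<delta> \<le> 1"
  shows "\<exists>A\<in>sets borel. A \<subseteq> B \<and> prob {\<omega>\<in>space M. hit X A \<omega> \<and> infinite (Vs X \<omega> \<inter> (B - A))}
            \<ge> prob {\<omega>\<in>space M. infinite (Vs X \<omega> \<inter> B)} - \<delta>"
proof -
  let ?I = "{\<omega>\<in>space M. infinite (Vs X \<omega> \<inter> B)}"
  define p where "p = prob ?I"
  define \<alpha> where "\<alpha> = \<delta>/4"
  have \<alpha>: "0 < \<alpha>" "\<alpha> \<le> 1" using \<delta> by (auto simp: \<alpha>_def)
  have "(\<lambda>n. (1-\<alpha>)^n) \<longlonglongrightarrow> 0" using \<alpha> by (intro LIMSEQ_power_zero) auto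
  then have "eventually (\<lambda>n. (1-\<alpha>)^n < \<delta>/4) sequentially" using \<delta> by (intro order_tendstoD(2)) auto
  then obtain m0 where m0: "(1-\<alpha>)^m0 < \<delta>/4" using ev_ex by blast
  define S where "S N = {\<omega>\<in>space M. infinite (Vs X \<omega> \<inter> B) \<and> cnt N B m0 \<omega>}" for N
  have Ssets: "S N \<in> sets M" for N
    unfolding S_def by (intro sets.sets_Collect_conj inf_sets cnt_sets B)
  have Sinc: "incseq S" unfolding incseq_def
  proof (intro allI impI subsetI)
    fix N N' \<omega> assume "N \<le> N'" "\<omega> \<in> S N"
    then show "\<omega> \<in> S N'" unfolding S_def
      using cntP_mono[of N N' B m0 \<omega>] cnt_iff[of N B m0 \<omega>] cnt_iff[of N' B m0 \<omega>] by auto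
  qed
  have Sun: "(\<Union>N. S N) = ?I"
  proof (rule set_eqI)
    fix \<omega>
    have "infinite (Vs X \<omega> \<inter> B) \<Longrightarrow> \<exists>N. cnt N B m0 \<omega>"
      using inf_iff[of \<omega> B] cnt_iff by blast
    then show "\<omega> \<in> (\<Union>N. S N) \<longleftrightarrow> \<omega> \<in> ?I" unfolding S_def by blast
  qed
  have "(\<lambda>N. prob (S N)) \<longlonglongrightarrow> p"
    using finite_Lim_measure_incseq[of S] Ssets Sinc Sun p_def by auto
  then have "eventually (\<lambda>N. p - \<delta>/4 < prob (S N)) sequentially" using \<delta> by (intro order_tendstoD(1)) auto
  then obtain N where N: "p - \<delta>/4 < prob (S N)" using ev_ex by blast
  define T where "T L = {\<omega>\<in>space M. \<forall>i. hit X (ccell q N -` {i}) \<omega> \<longrightarrow> i < L}" for L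
  have Tsets: "T L \<in> sets M" for L
    unfolding T_def by (intro sets.sets_Collect_countable_All sets.sets_Collect_imp hit_sets cvim sets.sets_Collect_const)
  have Tinc: "incseq T"
    unfolding incseq_def T_def by force
  have "{\<omega>\<in>space M. \<exists>L. \<forall>i. hit X (ccell q N -` {i}) \<omega> \<longrightarrow> i < L} = (\<Union>L. T L)"
    unfolding T_def by blast
  moreover have "prob {\<omega>\<in>space M. \<exists>L. \<forall>i. hit X (ccell q N -` {i}) \<omega> \<longrightarrow> i < L} = 1"
    using fmv_bound[OF fmv, of N] Tsets
    by (subst prob_Collect_eq_1) (auto simp: calculation intro: sets.countable_UN)
  ultimately have "(\<lambda>L. prob (T L)) \<longlonglongrightarrow> 1"
    using finite_Lim_measure_incseq[of T] Tsets Tinc by auto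
  then have "eventually (\<lambda>L. 1 - \<delta>/4 < prob (T L)) sequentially" using \<delta> by (intro order_tendstoD(1)) auto
  then obtain L where L: "1 - \<delta>/4 < prob (T L)" using ev_ex by blast
  define G where "G = S N \<inter> T L"
  have Gsets: "G \<in> sets M" using Ssets Tsets by (simp add: G_def)
  have "prob (S N) \<le> prob (G \<union> (space M - T L))"
    using Ssets[of N] Gsets Tsets[of L] by (intro finite_measure_mono) (auto simp: G_def dest: sets.sets_into_space)
  also have "\<dots> \<le> prob G + prob (space M - T L)"
    using Gsets Tsets[of L] by (intro measure_Un_le) auto
  also have "prob (space M - T L) = 1 - prob (T L)" using prob_compl Tsets by blast
  finally have pG: "prob G \<ge> p - \<delta>/2" using N L by simp
  define \<nu> where "\<nu> = Pi_pmf {..<L} False (\<lambda>_. bernoulli_pmf \<alpha>)"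
  define Ab where "Ab b = B \<inter> ccell q N -` {i. b i}" for b :: "nat \<Rightarrow> bool"
  have Absets: "Ab b \<in> sets borel" for b
    unfolding Ab_def using measurable_sets[OF ccell_meas[OF dense], of "{i. b i}" N] B by auto
  define E where "E b = {\<omega>\<in>space M. hit X (Ab b) \<omega> \<and> infinite (Vs X \<omega> \<inter> (B - Ab b))}" for b
  have Esets: "E b \<in> sets M" for b
    unfolding E_def using Absets B by (intro sets.sets_Collect_conj hit_sets inf_sets sets.Diff) auto
  have key: "measure_pmf.prob \<nu> {b. \<omega> \<in> E b} \<ge> 1 - \<delta>/2" if \<omega>G: "\<omega> \<in> G" for \<omega>
  proof -
    have \<omega>: "\<omega> \<in> space M" "infinite (Vs X \<omega> \<inter> B)" "cnt N B m0 \<omega>"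
         "\<forall>i. hit X (ccell q N -` {i}) \<omega> \<longrightarrow> i < L"
      using \<omega>G by (auto simp: G_def S_def T_def)
    obtain K where K: "finite K" "card K = m0" "\<forall>i\<in>K. hit X (B \<inter> ccell q N -` {i}) \<omega>"
      using \<omega>(3) unfolding cnt_def by blast
    have KL: "K \<subseteq> {..<L}"
      using K(3) \<omega>(4) unfolding hit_def by blast
    have sub: "Vs X \<omega> \<inter> B \<subseteq> (\<Union>i<L. Vs X \<omega> \<inter> B \<inter> ccell q N -` {i})"
    proof
      fix x assume x: "x \<in> Vs X \<omega> \<inter> B"
      then have "hit X (ccell q N -` {ccell q N x}) \<omega>" unfolding Vs_def hit_def by auto
      then show "x \<in> (\<Union>i<L. Vs X \<omega> \<inter> B \<inter> ccell q N -` {i})" using x \<omega>(4) by blast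
    qed
    obtain i0 where i0: "i0 < L" "infinite (Vs X \<omega> \<inter> B \<inter> ccell q N -` {i0})"
    proof (rule ccontr)
      assume "\<not> thesis"
      with that have "\<forall>i<L. finite (Vs X \<omega> \<inter> B \<inter> ccell q N -` {i})" by blast
      then have "finite (\<Union>i<L. Vs X \<omega> \<inter> B \<inter> ccell q N -` {i})" by (intro finite_UN_I) auto
      then show False using \<omega>(2) finite_subset[OF sub] by blast
    qed
    have "{b. \<not> b i0 \<and> (\<exists>i\<in>K. b i)} \<subseteq> {b. \<omega> \<in> E b}"
    proof safe
      fix b i assume b: "\<not> b i0" "i \<in> K" "b i"
      have "hit X (Ab b) \<omega>" using K(3) b(2,3) unfolding hit_def Ab_def by fastforce
      moreover have "Vs X \<omega> \<inter> B \<inter> ccell q N -` {i0} \<subseteq> Vs X \<omega> \<inter> (B - Ab b)"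
        using b(1) unfolding Ab_def by auto
      then have "infinite (Vs X \<omega> \<inter> (B - Ab b))" using i0(2) finite_subset by metis
      ultimately show "\<omega> \<in> E b" using \<omega>(1) unfolding E_def by blast
    qed
    then have "measure_pmf.prob \<nu> {b. \<not> b i0 \<and> (\<exists>i\<in>K. b i)} \<le> measure_pmf.prob \<nu> {b. \<omega> \<in> E b}"
      by (intro measure_pmf.finite_measure_mono) auto
    moreover have "measure_pmf.prob \<nu> {b. \<not> b i0 \<and> (\<exists>i\<in>K. b i)} \<ge> 1 - \<alpha> - (1 - \<alpha>) ^ card K"
      unfolding \<nu>_def using \<alpha> i0(1) KL by (intro pmf_part) auto
    ultimately show ?thesis using K(2) m0 by (simp add: \<alpha>_def)
  qed
  define Sb where "Sb = set_pmf \<nu>"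
  have Sbfin: "finite Sb"
  proof -
    have "Sb \<subseteq> PiE_dflt {..<L} False (set_pmf \<circ> (\<lambda>_. bernoulli_pmf \<alpha>))"
      unfolding Sb_def \<nu>_def by (rule set_Pi_pmf_subset') simp
    moreover have "finite (PiE_dflt {..<L} False (set_pmf \<circ> (\<lambda>_. bernoulli_pmf \<alpha>)))"
      by (intro finite_PiE_dflt) auto
    ultimately show ?thesis using finite_subset by blast
  qed
  define f where "f \<omega> = (\<Sum>b\<in>Sb. pmf \<nu> b * indicator (E b) \<omega>)" for \<omega>
  have fval: "measure_pmf.prob \<nu> {b. \<omega> \<in> E b} = f \<omega>" for \<omega>
  proof -
    have "measure_pmf.prob \<nu> {b. \<omega> \<in> E b} = measure_pmf.prob \<nu> ({b. \<omega> \<in> E b} \<inter> Sb)"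
      unfolding Sb_def by (rule measure_Int_set_pmf[symmetric])
    also have "\<dots> = sum (pmf \<nu>) ({b. \<omega> \<in> E b} \<inter> Sb)"
      using Sbfin by (intro measure_measure_pmf_finite) auto
    also have "\<dots> = sum (pmf \<nu>) (Sb \<inter> {b. \<omega> \<in> E b})" by (simp add: Int_commute)
    also have "\<dots> = (\<Sum>b\<in>Sb. if b \<in> {b. \<omega> \<in> E b} then pmf \<nu> b else 0)"
      using Sbfin by (rule sum.inter_restrict)
    also have "\<dots> = f \<omega>" unfolding f_def by (intro sum.cong) (auto simp: indicator_def)
    finally show ?thesis .
  qed
  have indI: "integrable M (indicator A :: 'b \<Rightarrow> real)" if "A \<in> sets M" for A
    by (intro integrable_real_indicator that) (simp add: emeasure_eq_measure)
  have intf: "integral\<^sup>L M f = (\<Sum>b\<in>Sb. pmf \<nu> b * prob (E b))"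
  proof -
    have "integral\<^sup>L M f = (\<Sum>b\<in>Sb. integral\<^sup>L M (\<lambda>\<omega>. pmf \<nu> b * indicator (E b) \<omega>))"
      unfolding f_def by (rule Bochner_Integration.integral_sum[where I=Sb and f="\<lambda>b \<omega>. pmf \<nu> b * indicator (E b) \<omega>"]) (intro integrable_mult_right indI Esets)
    also have "\<dots> = (\<Sum>b\<in>Sb. pmf \<nu> b * prob (E b))"
    proof (intro sum.cong refl)
      fix b
      have "E b \<inter> space M = E b" using Esets[of b] sets.sets_into_space by blast
      then show "integral\<^sup>L M (\<lambda>\<omega>. pmf \<nu> b * indicator (E b) \<omega>) = pmf \<nu> b * prob (E b)"
        by simp
    qed
    finally show ?thesis .
  qed
  have "integral\<^sup>L M (\<lambda>\<omega>. (1 - \<delta>/2) * indicator G \<omega>) \<le> integral\<^sup>L M f"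
  proof (rule integral_mono)
    show "integrable M (\<lambda>\<omega>. (1 - \<delta>/2) * indicator G \<omega>)" by (intro integrable_mult_right indI Gsets)
    show "integrable M f" unfolding f_def by (intro Bochner_Integration.integrable_sum integrable_mult_right indI Esets)
    fix \<omega> assume "\<omega> \<in> space M"
    show "(1 - \<delta>/2) * indicator G \<omega> \<le> f \<omega>"
    proof (cases "\<omega> \<in> G")
      case True then show ?thesis using key[OF True] fval[of \<omega>] by simp
    next
      case False then show ?thesis unfolding f_def by (simp add: sum_nonneg)
    qed
  qed
  moreover have "G \<inter> space M = G" using Gsets sets.sets_into_space by blast
  ultimately have "(1 - \<delta>/2) * prob G \<le> (\<Sum>b\<in>Sb. pmf \<nu> b * prob (E b))"
    using intf by simp
  moreover have "(1 - \<delta>/2) * (p - \<delta>/2) \<le> (1 - \<delta>/2) * prob G"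
    using pG \<delta> by (intro mult_left_mono) auto
  moreover have "p \<le> 1" unfolding p_def by simp
  moreover have "p - \<delta> \<le> (1 - \<delta>/2) * (p - \<delta>/2)"
  proof -
    have "(1 - \<delta>/2) * (p - \<delta>/2) = p - \<delta> + ((\<delta>/2)*(1-p) + (\<delta>/2)*(\<delta>/2))" by (simp add: field_simps)
    moreover have "0 \<le> (\<delta>/2)*(1-p) + (\<delta>/2)*(\<delta>/2)" using \<delta> \<open>p \<le> 1\<close> by simp
    ultimately show ?thesis by linarith
  qed
  ultimately have sumge: "p - \<delta> \<le> (\<Sum>b\<in>Sb. pmf \<nu> b * prob (E b))" by linarith
  obtain b where b: "b \<in> Sb" "prob (E b) \<ge> p - \<delta>"
  proof (rule ccontr)
    assume "\<not> thesis"
    with that have lt: "\<forall>b\<in>Sb. prob (E b) < p - \<delta>" by force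
    have "(\<Sum>b\<in>Sb. pmf \<nu> b * prob (E b)) < (\<Sum>b\<in>Sb. pmf \<nu> b * (p - \<delta>))"
    proof (rule sum_strict_mono)
      show "finite Sb" by (rule Sbfin)
      show "Sb \<noteq> {}" unfolding Sb_def by (rule set_pmf_not_empty)
      fix b assume "b \<in> Sb"
      then have "pmf \<nu> b > 0" unfolding Sb_def by (simp add: pmf_positive)
      then show "pmf \<nu> b * prob (E b) < pmf \<nu> b * (p - \<delta>)" using lt \<open>b \<in> Sb\<close> by simp
    qed
    also have "\<dots> = p - \<delta>"
      using sum_pmf_eq_1[OF Sbfin, of \<nu>] unfolding Sb_def by (simp add: sum_distrib_right[symmetric])
    finally show False using sumge by simp
  qed
  show ?thesis
  proof (rule bexI[of _ "Ab b"], intro conjI)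
    show "Ab b \<subseteq> B" unfolding Ab_def by blast
    show "prob {\<omega>\<in>space M. hit X (Ab b) \<omega> \<and> infinite (Vs X \<omega> \<inter> (B - Ab b))} \<ge> prob ?I - \<delta>"
      using b(2) unfolding E_def p_def .
  qed (rule Absets)
qed

end


lemma subsingleton_finite: "(\<And>a b. a \<in> S \<Longrightarrow> b \<in> S \<Longrightarrow> a = b) \<Longrightarrow> finite S"
proof (cases "S = {}")
  case False
  assume h: "\<And>a b. a \<in> S \<Longrightarrow> b \<in> S \<Longrightarrow> a = b"
  from False obtain a where "a \<in> S" by blast
  then have "S \<subseteq> {a}" using h by blast
  then show ?thesis using finite_subset by blast
qed simp

lemma FS_imp_FMV:
  fixes M :: "'b measure" and X :: "nat \<Rightarrow> 'b \<Rightarrow> 'a::topological_space"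
  assumes "FS M X" shows "FMV M X"
  unfolding FMV_def
proof (intro allI impI)
  fix A :: "nat \<Rightarrow> 'a set"
  assume A: "(\<forall>k\<ge>1. A k \<in> sets borel) \<and> disjoint_family_on A {1..} \<and> (\<Union>k\<in>{1..}. A k) = UNIV"
  from assms have "AE \<omega> in M. finite {x. \<exists>t\<ge>1. X t \<omega> = x}" unfolding FS_def .
  then show "AE \<omega> in M. finite {k. k \<ge> 1 \<and> (\<exists>t\<ge>1. X t \<omega> \<in> A k)}"
  proof (rule eventually_mono)
    fix \<omega> assume fin: "finite {x. \<exists>t\<ge>1. X t \<omega> = x}"
    have sub: "{k. k \<ge> 1 \<and> (\<exists>t\<ge>1. X t \<omega> \<in> A k)} \<subseteq> (\<Union>x\<in>{x. \<exists>t\<ge>1. X t \<omega> = x}. {k. k \<ge> 1 \<and> x \<in> A k})"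
      by blast
    have "finite {k. k \<ge> 1 \<and> x \<in> A k}" for x
    proof (rule subsingleton_finite)
      fix a b assume "a \<in> {k. k \<ge> 1 \<and> x \<in> A k}" "b \<in> {k. k \<ge> 1 \<and> x \<in> A k}"
      then show "a = b" using A unfolding disjoint_family_on_def by auto
    qed
    then have "finite (\<Union>x\<in>{x. \<exists>t\<ge>1. X t \<omega> = x}. {k. k \<ge> 1 \<and> x \<in> A k})"
      using fin by (intro finite_UN_I) auto
    then show "finite {k. k \<ge> 1 \<and> (\<exists>t\<ge>1. X t \<omega> \<in> A k)}" using sub finite_subset by blast
  qed
qed

context fmvp begin

lemma main: assumes fmv: "FMV M X" shows "prob {\<omega>\<in>space M. infinite (Vs X \<omega> \<inter> UNIV)} = 0"
proof (rule ccontr)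
  define p where "p = prob {\<omega>\<in>space M. infinite (Vs X \<omega> \<inter> UNIV)}"
  assume "prob {\<omega>\<in>space M. infinite (Vs X \<omega> \<inter> UNIV)} \<noteq> 0"
  then have p0: "p > 0" unfolding p_def using measure_nonneg by (simp add: order_less_le)
  have p1: "p \<le> 1" unfolding p_def by simp
  define spl where "spl R k = (SOME A. A \<in> sets borel \<and> A \<subseteq> R \<and>
      prob {\<omega>\<in>space M. hit X A \<omega> \<and> infinite (Vs X \<omega> \<inter> (R - A))}
         \<ge> prob {\<omega>\<in>space M. infinite (Vs X \<omega> \<inter> R)} - p / 2^(k+2))" for R k
  define R where "R = rec_nat UNIV (\<lambda>k Rk. Rk - spl Rk k)"
  have R0: "R 0 = UNIV" by (simp add: R_def)
  have RS: "R (Suc k) = R k - spl (R k) k" for k by (simp add: R_def)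
  define Aq where "Aq k = spl (R k) k" for k
  have step: "Aq k \<in> sets borel \<and> Aq k \<subseteq> R k \<and> prob {\<omega>\<in>space M. hit X (Aq k) \<omega> \<and> infinite (Vs X \<omega> \<inter> (R k - Aq k))}
         \<ge> prob {\<omega>\<in>space M. infinite (Vs X \<omega> \<inter> R k)} - p / 2^(k+2)" if Rk: "R k \<in> sets borel" for k
  proof -
    have k1: "(1::real) \<le> 2^(k+2)" by (rule one_le_power) simp
    have k2: "p \<le> 2^(k+2)" using p1 k1 by linarith
    have d: "0 < p / 2^(k+2)" "p / 2^(k+2) \<le> 1"
      using p0 k2 by (auto simp: divide_le_eq simp del: power_Suc)
    have ex: "\<exists>A. A \<in> sets borel \<and> A \<subseteq> R k \<and>
      prob {\<omega>\<in>space M. hit X A \<omega> \<and> infinite (Vs X \<omega> \<inter> (R k - A))}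
         \<ge> prob {\<omega>\<in>space M. infinite (Vs X \<omega> \<inter> R k)} - p / 2^(k+2)"
      using split_step[OF fmv Rk d] by blast
    show ?thesis unfolding Aq_def spl_def by (rule someI_ex[OF ex])
  qed
  have inv: "R k \<in> sets borel \<and> prob {\<omega>\<in>space M. infinite (Vs X \<omega> \<inter> R k)} \<ge> p/2 + p/2^(k+1)" for k
  proof (induction k)
    case 0 then show ?case using R0 p_def by simp
  next
    case (Suc k)
    then have Rk: "R k \<in> sets borel" and ih: "prob {\<omega>\<in>space M. infinite (Vs X \<omega> \<inter> R k)} \<ge> p/2 + p/2^(k+1)" by auto
    note st = step[OF Rk]
    have RSk: "R (Suc k) = R k - Aq k" using RS Aq_def by simp
    have b: "R (Suc k) \<in> sets borel" using Rk st RSk by auto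
    have "prob {\<omega>\<in>space M. hit X (Aq k) \<omega> \<and> infinite (Vs X \<omega> \<inter> (R k - Aq k))}
        \<le> prob {\<omega>\<in>space M. infinite (Vs X \<omega> \<inter> R (Suc k))}"
      using inf_sets[OF b] RSk by (intro finite_measure_mono) auto
    moreover have "p/2 + p/2^(k+1) - p / 2^(k+2) = p/2 + p/2^(Suc k + 1)" by (simp add: field_simps)
    ultimately show ?case using st ih b by linarith
  qed
  define H where "H k = {\<omega>\<in>space M. hit X (Aq k) \<omega>}" for k
  have Aqb: "Aq k \<in> sets borel" and AqR: "Aq k \<subseteq> R k" for k using step inv by blast+
  have Hsets: "H k \<in> sets M" for k unfolding H_def by (rule hit_sets[OF Aqb])
  have Hp: "prob (H k) \<ge> p/2" for k
  proof -
    have "prob {\<omega>\<in>space M. hit X (Aq k) \<omega> \<and> infinite (Vs X \<omega> \<inter> (R k - Aq k))} \<le> prob (H k)"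
      using Hsets unfolding H_def by (intro finite_measure_mono) auto
    moreover have "p/2^(k+2) \<le> p/2^(k+1)" using p0 by (simp add: field_simps)
    ultimately show ?thesis using step[of k] inv[of k] by linarith
  qed
  have Rdec: "decseq R" by (rule decseq_SucI) (auto simp: RS)
  have disj: "Aq j \<inter> Aq k = {}" if "j < k" for j k
  proof -
    have "R k \<subseteq> R (Suc j)" using Rdec that by (simp add: decseq_def)
    then show ?thesis using AqR[of k] RS[of j] Aq_def by auto
  qed
  define P where "P k = (if k = 0 then {} else if k = 1 then UNIV - (\<Union>j. Aq j) else Aq (k - 2))" for k
  have "(\<forall>k\<ge>1. P k \<in> sets borel) \<and> disjoint_family_on P {1..} \<and> (\<Union>k\<in>{1..}. P k) = UNIV"
  proof (intro conjI)
    have U: "(\<Union>j. Aq j) \<in> sets borel" using Aqb by auto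
    then have "UNIV - (\<Union>j. Aq j) \<in> sets borel" using borel_comp[OF U] by (simp add: Compl_eq_Diff_UNIV)
    then show "\<forall>k\<ge>1. P k \<in> sets borel" using Aqb by (auto simp: P_def)
    show "disjoint_family_on P {1..}" unfolding disjoint_family_on_def
    proof (intro ballI impI)
      fix m n :: nat assume mn: "m \<in> {1..}" "n \<in> {1..}" "m \<noteq> n"
      show "P m \<inter> P n = {}"
      proof (cases "m = 1 \<or> n = 1")
        case True then show ?thesis using mn by (auto simp: P_def)
      next
        case False
        then have "m - 2 \<noteq> n - 2" "P m = Aq (m - 2)" "P n = Aq (n - 2)" using mn by (auto simp: P_def)
        then show ?thesis using disj[of "m-2" "n-2"] disj[of "n-2" "m-2"]
          by (metis Int_commute linorder_neqE_nat)
      qed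
    qed
    show "(\<Union>k\<in>{1..}. P k) = UNIV"
    proof (rule set_eqI)
      fix x
      have "\<exists>k\<ge>1. x \<in> P k"
      proof (cases "x \<in> (\<Union>j. Aq j)")
        case True
        then obtain j where "x \<in> Aq j" by blast
        then show ?thesis by (intro exI[of _ "j+2"]) (simp add: P_def)
      next
        case False then show ?thesis by (intro exI[of _ 1]) (simp add: P_def)
      qed
      then show "x \<in> (\<Union>k\<in>{1..}. P k) \<longleftrightarrow> x \<in> UNIV" by auto
    qed
  qed
  then have ae: "AE \<omega> in M. finite {k. k \<ge> 1 \<and> (\<exists>t\<ge>1. X t \<omega> \<in> P k)}"
    using fmv unfolding FMV_def by blast
  define U where "U N = (\<Union>k\<in>{N..}. H k)" for N
  have Usets: "U N \<in> sets M" for N unfolding U_def using Hsets by auto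
  have Udec: "decseq U" unfolding decseq_def U_def by (auto intro: order_trans)
  have "(\<lambda>N. prob (U N)) \<longlonglongrightarrow> prob (\<Inter>N. U N)"
    using Usets Udec by (intro finite_Lim_measure_decseq) auto
  moreover have "p/2 \<le> prob (U N)" for N
  proof -
    have "prob (H N) \<le> prob (U N)" using Usets by (intro finite_measure_mono) (auto simp: U_def)
    then show ?thesis using Hp[of N] by linarith
  qed
  ultimately have lim: "p/2 \<le> prob (\<Inter>N. U N)" by (intro LIMSEQ_le_const) auto
  from ae obtain N0 where N0: "{\<omega>\<in>space M. \<not> finite {k. k \<ge> 1 \<and> (\<exists>t\<ge>1. X t \<omega> \<in> P k)}} \<subseteq> N0"
    "emeasure M N0 = 0" "N0 \<in> sets M" by (rule AE_E)
  have "(\<Inter>N. U N) \<subseteq> N0"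
  proof
    fix \<omega> assume \<omega>: "\<omega> \<in> (\<Inter>N. U N)"
    then have sp: "\<omega> \<in> space M" by (auto simp: U_def H_def)
    have "\<forall>N. \<exists>k\<ge>N. k \<in> {k. hit X (Aq k) \<omega>}" using \<omega> by (auto simp: U_def H_def)
    then have inf: "infinite {k. hit X (Aq k) \<omega>}" by (simp add: infinite_nat_iff_unbounded_le)
    have "(\<lambda>k. k + 2) ` {k. hit X (Aq k) \<omega>} \<subseteq> {k. k \<ge> 1 \<and> (\<exists>t\<ge>1. X t \<omega> \<in> P k)}"
      by (auto simp: P_def hit_def)
    moreover have "infinite ((\<lambda>k. k + 2) ` {k. hit X (Aq k) \<omega>})"
      using inf finite_image_iff[of "\<lambda>k::nat. k + 2" "{k. hit X (Aq k) \<omega>}"] by (simp add: inj_on_def)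
    ultimately have "infinite {k. k \<ge> 1 \<and> (\<exists>t\<ge>1. X t \<omega> \<in> P k)}" using finite_subset by blast
    then show "\<omega> \<in> N0" using N0(1) sp by blast
  qed
  then have "prob (\<Inter>N. U N) \<le> prob N0" using N0(3) by (intro finite_measure_mono)
  also have "prob N0 = 0" using N0(2) by (simp add: measure_def)
  finally show False using lim p0 by linarith
qed

end

theorem theorem5:
  fixes M :: "'b measure" and X :: "nat \<Rightarrow> 'b \<Rightarrow> 'a::metric_space"
  assumes "separable_space (euclidean :: 'a topology)"
    and "prob_space M"
    and "\<And>t. t \<ge> 1 \<Longrightarrow> X t \<in> borel_measurable M"
  shows "FMV M X \<longleftrightarrow> FS M X"
proof -
  obtain C :: "'a set" where C: "countable C" "closure C = UNIV"
    using assms(1) unfolding separable_space_def by auto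
  have Cne: "C \<noteq> {}" using C(2) by auto
  define q where "q = from_nat_into C"
  have dense: "\<exists>i. dist x (q i) < e" if "e > 0" for x :: 'a and e :: real
  proof -
    have "x \<in> closure C" using C(2) by simp
    then have "\<exists>y\<in>C. dist y x < e" using closure_approachable that by blast
    then obtain y where y: "y \<in> C" "dist y x < e" by blast
    then obtain i where "q i = y" unfolding q_def using from_nat_into_surj[OF C(1)] by blast
    then show ?thesis using y by (auto simp: dist_commute)
  qed
  interpret F: fmvp M X q
  proof (rule fmvp.intro)
    show "prob_space M" by (rule assms(2))
    show "fmvp_axioms M X q" unfolding fmvp_axioms_def using assms(3) dense by blast
  qed
  show ?thesis
  proof
    assume fmv: "FMV M X"
    let ?N = "{\<omega>\<in>space M. infinite (Vs X \<omega> \<inter> UNIV)}"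
    have N: "?N \<in> sets M" by (rule F.inf_sets) simp
    have "measure M ?N = 0" by (rule F.main[OF fmv])
    then have "emeasure M ?N = 0" using F.emeasure_eq_measure by simp
    then have "?N \<in> null_sets M" using N by auto
    then show "FS M X" unfolding FS_def
      by (rule AE_I') (auto simp: Vs_def)
  next
    assume "FS M X" then show "FMV M X" by (rule FS_imp_FMV)
  qed
qed


end
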